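(* Let $\sigma>0$, $A>0$, and let $f:\mathbb{R}\to\mathbb{R}$ be continuous, bandlimited to $\sigma$ rad/s, with $|f(t)|\le A/(1+t^2)$ for all $t$. Let $\alpha>A\sigma$, $g(t)=\alpha t+f(t)$ and $h(u)=g^{-1}(u)-u/\alpha$. Then for every $1\le p<\infty$, $$\|h\|_p=\frac{1}{\alpha^{1-\frac1p}}\|f\|_p .$$
   Context: Fourier transform convention: $\hat f(\xi)=\int_{\mathbb{R}}f(t)e^{-i2\pi\xi t}\,dt$; $f$ is bandlimited to $\sigma$ rad/s if $\hat f(\xi)=0$ for $|\xi|>\sigma/(2\pi)$. $\|\cdot\|_p$ denotes the $L^p(\mathbb{R})$ norm. *)

theory Defs
  imports "HOL-Analysis.Analysis"
begin

definition fourier_transform :: "(real \<Rightarrow> real) \<Rightarrow> real \<Rightarrow> complex" where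
  "fourier_transform f \<xi> =
     (\<integral> t. complex_of_real (f t) * cis (- 2 * pi * \<xi> * t) \<partial>lborel)"

text \<open>f is bandlimited to sigma rad/s: hat f vanishes for |xi| > sigma/(2 pi).\<close>
definition bandlimited :: "real \<Rightarrow> (real \<Rightarrow> real) \<Rightarrow> bool" where
  "bandlimited \<sigma> f \<longleftrightarrow> (\<forall>\<xi>. \<bar>\<xi>\<bar> > \<sigma> / (2 * pi) \<longrightarrow> fourier_transform f \<xi> = 0)"

text \<open>L^p norm (for functions with integrable p-th power).\<close>
definition Lp_norm :: "real \<Rightarrow> (real \<Rightarrow> real) \<Rightarrow> real" where
  "Lp_norm p f = (\<integral> t. \<bar>f t\<bar> powr p \<partial>lborel) powr (1 / p)"

end

theory Submission
  imports Defs "HOL-Probability.Probability"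
begin

lemma odd_sq_sums: "(\<lambda>k. 1 / (2 * real k + 1)\<^sup>2) sums (pi\<^sup>2 / 8)"
proof -
  have a: "(\<lambda>n. 1 / (real n + 1)\<^sup>2) sums (pi\<^sup>2 / 6)" using inverse_squares_sums by (simp add: add.commute)
  have "(\<lambda>k. sum (\<lambda>n. 1 / (real n + 1)\<^sup>2) {k * 2..<k * 2 + 2}) sums (pi\<^sup>2 / 6)"
    using sums_group[OF a, of 2] by simp
  moreover have "sum (\<lambda>n. 1 / (real n + 1)\<^sup>2) {k * 2..<k * 2 + 2} = 1 / (2 * real k + 1)\<^sup>2 + (1/4) * (1 / (real k + 1)\<^sup>2)" for k
    by (simp add: numeral_2_eq_2 field_simps power2_eq_square)
  ultimately have "(\<lambda>k. 1 / (2 * real k + 1)\<^sup>2 + (1/4) * (1 / (real k + 1)\<^sup>2)) sums (pi\<^sup>2 / 6)" by simp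
  from sums_diff[OF this sums_mult[OF a, of "1/4"]]
  show ?thesis by simp
qed

definition Qs :: "nat \<Rightarrow> real \<Rightarrow> real" where
  "Qs n x = (\<Sum>k<n. (-1)^k * sin ((2 * real k + 1) * x))"
definition Ps :: "nat \<Rightarrow> real \<Rightarrow> real" where
  "Ps n x = (\<Sum>k<n. (-1)^k * cos ((2 * real k + 1) * x) / (2 * real k + 1))"
definition Ss :: "nat \<Rightarrow> real \<Rightarrow> real" where
  "Ss n x = (\<Sum>k<n. (-1)^k * sin ((2 * real k + 1) * x) / (2 * real k + 1)^2)"

lemma Qs_closed: "2 * cos x * Qs n x = - ((-1)^n * sin (2 * real n * x))"
proof (induction n)
  case 0 then show ?case by (simp add: Qs_def)
next
  case (Suc n)
  have e: "2 * cos x * sin ((2 * real n + 1) * x) = sin ((2 * real n + 2) * x) + sin (2 * real n * x)"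
  proof -
    have g: "sin (a + x) + sin (a - x) = 2 * cos x * sin a" for a by (simp add: sin_add sin_diff)
    have "sin ((2 * real n + 2) * x) = sin ((2 * real n + 1) * x + x)" by (simp add: algebra_simps)
    moreover have "sin (2 * real n * x) = sin ((2 * real n + 1) * x - x)" by (simp add: algebra_simps)
    ultimately show ?thesis using g[of "(2 * real n + 1) * x"] by simp
  qed
  have "2 * cos x * Qs (Suc n) x = 2 * cos x * Qs n x + (-1)^n * (2 * cos x * sin ((2 * real n + 1) * x))"
    by (simp add: Qs_def algebra_simps)
  also have "\<dots> = - ((-1)^(Suc n) * sin (2 * real (Suc n) * x))"
    unfolding Suc.IH e by (simp add: algebra_simps)
  finally show ?case .
qed

lemma sin_lin_deriv: "((\<lambda>x. sin (a * x)) has_real_derivative (cos (a * x) * a)) (at x)"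
  by (auto intro!: derivative_eq_intros)
lemma cos_lin_deriv: "((\<lambda>x. cos (a * x)) has_real_derivative (- sin (a * x) * a)) (at x)"
  by (auto intro!: derivative_eq_intros)

lemma Ps_deriv: "(Ps n has_real_derivative (- Qs n x)) (at x)"
proof -
  have "((\<lambda>x. \<Sum>k<n. ((-1)^k / (2 * real k + 1)) * cos ((2 * real k + 1) * x)) has_real_derivative
      (\<Sum>k<n. ((-1)^k / (2 * real k + 1)) * (- sin ((2 * real k + 1) * x) * (2 * real k + 1)))) (at x)"
    by (intro DERIV_sum DERIV_cmult cos_lin_deriv)
  moreover have "(\<Sum>k<n. ((-1)^k / (2 * real k + 1)) * (- sin ((2 * real k + 1) * x) * (2 * real k + 1))) = - Qs n x"
    unfolding Qs_def sum_negf[symmetric] by (intro sum.cong) (auto simp: field_simps)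
  moreover have "Ps n = (\<lambda>x. \<Sum>k<n. ((-1)^k / (2 * real k + 1)) * cos ((2 * real k + 1) * x))"
    unfolding Ps_def by (auto intro!: ext sum.cong)
  ultimately show ?thesis by simp
qed

lemma Ss_deriv: "(Ss n has_real_derivative Ps n x) (at x)"
proof -
  have "((\<lambda>x. \<Sum>k<n. ((-1)^k / (2 * real k + 1)^2) * sin ((2 * real k + 1) * x)) has_real_derivative
      (\<Sum>k<n. ((-1)^k / (2 * real k + 1)^2) * (cos ((2 * real k + 1) * x) * (2 * real k + 1)))) (at x)"
    by (intro DERIV_sum DERIV_cmult sin_lin_deriv)
  moreover have "(\<Sum>k<n. ((-1)^k / (2 * real k + 1)^2) * (cos ((2 * real k + 1) * x) * (2 * real k + 1))) = Ps n x"
  proof -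
    have q: "c / a^2 * (b * a) = c * b / a" if "a \<noteq> 0" for a b c :: real
      using that by (simp add: power2_eq_square)
    have "2 * real k + 1 \<noteq> 0" for k by linarith
    then show ?thesis unfolding Ps_def by (intro sum.cong refl) (rule q, simp)
  qed
  moreover have "Ss n = (\<lambda>x. \<Sum>k<n. ((-1)^k / (2 * real k + 1)^2) * sin ((2 * real k + 1) * x))"
    unfolding Ss_def by (auto intro!: ext sum.cong)
  ultimately show ?thesis by simp
qed

lemma mvt_bound:
  fixes F F' :: "real \<Rightarrow> real"
  assumes "\<And>t. \<bar>t\<bar> \<le> r \<Longrightarrow> (F has_real_derivative F' t) (at t)"
    and "\<And>t. \<bar>t\<bar> \<le> r \<Longrightarrow> \<bar>F' t\<bar> \<le> B" and "\<bar>y\<bar> \<le> r"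
  shows "\<bar>F y - F 0\<bar> \<le> B * \<bar>y\<bar>"
proof (cases "y = 0")
  case True then show ?thesis by simp
next
  case False
  show ?thesis
  proof (cases "y > 0")
    case True
    obtain z where z: "0 < z" "z < y" "F y - F 0 = (y - 0) * F' z"
      using MVT2[of 0 y F F'] True assms(1,3) by auto
    then have "\<bar>F' z\<bar> \<le> B" using assms(2,3) True by auto
    then show ?thesis using z True by (simp add: abs_mult mult.commute)
  next
    case False
    with \<open>y \<noteq> 0\<close> have y: "y < 0" by simp
    obtain z where z: "y < z" "z < 0" "F 0 - F y = (0 - y) * F' z"
      using MVT2[of y 0 F F'] y assms(1,3) by auto
    then have "\<bar>F' z\<bar> \<le> B" using assms(2,3) y by auto
    then show ?thesis using z y by (simp add: abs_mult mult.commute abs_minus_commute)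
  qed
qed


lemma cos_ge_cos:
  assumes "\<bar>x\<bar> < pi/2" "\<bar>y\<bar> \<le> \<bar>x\<bar>" shows "cos x \<le> cos y" "0 < cos x"
proof -
  have "cos \<bar>x\<bar> \<le> cos \<bar>y\<bar>" using assms by (intro cos_monotone_0_pi_le) auto
  then show "cos x \<le> cos y" by (simp add: cos_abs_real)
  have "0 < cos \<bar>x\<bar>" using assms by (intro cos_gt_zero_pi) auto
  then show "0 < cos x" by (simp add: cos_abs_real)
qed

lemma Ps_bound:
  assumes x: "\<bar>x\<bar> < pi/2" and y: "\<bar>y\<bar> \<le> \<bar>x\<bar>" and n: "n \<ge> 1"
  shows "\<bar>Ps n y - Ps n 0\<bar> \<le> (1 / cos x + \<bar>x\<bar> / (cos x)^2) / real n"
proof -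
  have cx: "0 < cos x" using cos_ge_cos[OF x, of 0] by simp
  define W where "W t = - ((-1)^n * cos (2 * real n * t)) / (4 * real n * cos t)" for t
  define G' where "G' t = (-1)^n * cos (2 * real n * t) * sin t / (4 * real n * (cos t)^2)" for t
  have np: "real n > 0" using n by simp
  have cpos: "cos t > 0" if "\<bar>t\<bar> \<le> \<bar>x\<bar>" for t
    using cos_ge_cos[OF x that] cx by linarith
  have derW: "(W has_real_derivative ((-1)^n * sin (2 * real n * t) / (2 * cos t) - G' t)) (at t)"
    if "\<bar>t\<bar> \<le> \<bar>x\<bar>" for t
  proof -
    have ct: "cos t \<noteq> 0" using cpos[OF that] by simp
    have "(W has_real_derivative
       (- ((-1)^n * (- sin (2 * real n * t) * (2 * real n))) * (4 * real n * cos t)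
         - (- ((-1)^n * cos (2 * real n * t))) * (4 * real n * (- sin t))) / (4 * real n * cos t)^2) (at t)"
      unfolding W_def[abs_def]
      by (rule DERIV_divide[THEN DERIV_cong]) (use n in \<open>auto intro!: derivative_eq_intros simp: ct np power2_eq_square algebra_simps\<close>)
    moreover have "(- ((-1)^n * (- sin (2 * real n * t) * (2 * real n))) * (4 * real n * cos t)
         - (- ((-1)^n * cos (2 * real n * t))) * (4 * real n * (- sin t))) / (4 * real n * cos t)^2
       = (-1)^n * sin (2 * real n * t) / (2 * cos t) - G' t"
      unfolding G'_def using ct np by (simp add: field_simps power2_eq_square)
    ultimately show ?thesis by simp
  qed
  have derP: "(Ps n has_real_derivative ((-1)^n * sin (2 * real n * t) / (2 * cos t))) (at t)"
    if "\<bar>t\<bar> \<le> \<bar>x\<bar>" for t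
  proof -
    have ct: "cos t \<noteq> 0" using cpos[OF that] by simp
    have "- Qs n t = (-1)^n * sin (2 * real n * t) / (2 * cos t)"
      using Qs_closed[of t n] ct by (simp add: field_simps)
    then show ?thesis using Ps_deriv[of n t] by simp
  qed
  have derG: "((\<lambda>t. Ps n t - W t) has_real_derivative G' t) (at t)" if "\<bar>t\<bar> \<le> \<bar>x\<bar>" for t
    using DERIV_diff[OF derP[OF that] derW[OF that]] by simp
  have bG: "\<bar>G' t\<bar> \<le> 1 / (4 * real n * (cos x)^2)" if "\<bar>t\<bar> \<le> \<bar>x\<bar>" for t
  proof -
    have c1: "cos x \<le> cos t" using cos_ge_cos[OF x that] by simp
    have "\<bar>G' t\<bar> = \<bar>cos (2 * real n * t)\<bar> * \<bar>sin t\<bar> / (4 * real n * (cos t)^2)"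
      unfolding G'_def using np by (simp add: abs_mult power_abs)
    also have "\<dots> \<le> 1 / (4 * real n * (cos t)^2)"
      by (intro divide_right_mono mult_le_one) auto
    also have "\<dots> \<le> 1 / (4 * real n * (cos x)^2)"
    proof -
      have "(cos x)^2 \<le> (cos t)^2" using c1 cx by (intro power_mono) auto
      then have "4 * real n * (cos x)^2 \<le> 4 * real n * (cos t)^2" using np by simp
      moreover have "0 < 4 * real n * (cos x)^2" using np cx by simp
      ultimately show ?thesis using np by (intro divide_left_mono mult_pos_pos) auto
    qed
    finally show ?thesis by simp
  qed
  have bW: "\<bar>W t\<bar> \<le> 1 / (4 * real n * cos x)" if "\<bar>t\<bar> \<le> \<bar>x\<bar>" for t
  proof -
    have c1: "cos x \<le> cos t" using cos_ge_cos[OF x that] by simp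
    have d: "4 * real n * cos t > 0" using np cpos[OF that] by simp
    have "\<bar>W t\<bar> = \<bar>cos (2 * real n * t)\<bar> / (4 * real n * cos t)"
      unfolding W_def abs_divide abs_of_pos[OF d] by (simp add: abs_mult)
    also have "\<dots> \<le> 1 / (4 * real n * cos t)"
      using d by (intro divide_right_mono) auto
    also have "\<dots> \<le> 1 / (4 * real n * cos x)"
      using c1 cx np by (intro divide_left_mono mult_left_mono mult_pos_pos) auto
    finally show ?thesis .
  qed
  have "\<bar>(Ps n y - W y) - (Ps n 0 - W 0)\<bar> \<le> 1 / (4 * real n * (cos x)^2) * \<bar>y\<bar>"
    by (rule mvt_bound[where F' = G' and r = "\<bar>x\<bar>"]) (use derG bG y in auto)
  moreover have "\<bar>W y\<bar> \<le> 1 / (4 * real n * cos x)" "\<bar>W 0\<bar> \<le> 1 / (4 * real n * cos x)"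
    using bW y by auto
  ultimately have "\<bar>Ps n y - Ps n 0\<bar> \<le> 1 / (4 * real n * (cos x)^2) * \<bar>x\<bar> + 2 / (4 * real n * cos x)"
  proof -
    assume a: "\<bar>(Ps n y - W y) - (Ps n 0 - W 0)\<bar> \<le> 1 / (4 * real n * (cos x)^2) * \<bar>y\<bar>"
      "\<bar>W y\<bar> \<le> 1 / (4 * real n * cos x)" "\<bar>W 0\<bar> \<le> 1 / (4 * real n * cos x)"
    have "1 / (4 * real n * (cos x)^2) * \<bar>y\<bar> \<le> 1 / (4 * real n * (cos x)^2) * \<bar>x\<bar>"
      using y by (intro mult_left_mono) auto
    then show ?thesis using a by (simp add: abs_le_iff)
  qed
  also have "\<dots> \<le> (1 / cos x + \<bar>x\<bar> / (cos x)^2) / real n"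
    using cx np by (simp add: field_simps power2_eq_square)
  finally show ?thesis .
qed

lemma Ps0_lim: "(\<lambda>n. Ps n 0) \<longlonglongrightarrow> pi / 4"
proof -
  have s: "summable (\<lambda>k. (-1)^k * 1 / real (k * 2 + 1))"
    using summable_arctan_series[of 1] by simp
  have "(\<lambda>n. \<Sum>k<n. (-1)^k * 1 / real (k * 2 + 1)) \<longlonglongrightarrow> pi / 4"
    unfolding pi_series by (rule summable_LIMSEQ[OF s])
  moreover have "Ps n 0 = (\<Sum>k<n. (-1)^k * 1 / real (k * 2 + 1))" for n
    unfolding Ps_def by (intro sum.cong) (auto simp: mult.commute)
  ultimately show ?thesis by simp
qed

lemma Ss_lim:
  assumes x: "\<bar>x\<bar> < pi/2"
  shows "(\<lambda>n. Ss n x) \<longlonglongrightarrow> pi * x / 4"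
proof -
  define C where "C = 1 / cos x + \<bar>x\<bar> / (cos x)^2"
  define e where "e n = C / real n + \<bar>Ps n 0 - pi / 4\<bar>" for n
  have e0: "e \<longlonglongrightarrow> 0"
  proof -
    have "(\<lambda>n. C / real n) \<longlonglongrightarrow> 0" by real_asymp
    moreover have "(\<lambda>n. \<bar>Ps n 0 - pi / 4\<bar>) \<longlonglongrightarrow> 0"
      using tendsto_rabs[OF tendsto_diff[OF Ps0_lim tendsto_const[of "pi/4"]]] by simp
    ultimately show ?thesis unfolding e_def using tendsto_add by fastforce
  qed
  have b: "\<bar>Ss n x - pi * x / 4\<bar> \<le> e n * \<bar>x\<bar>" if n: "n \<ge> 1" for n
  proof -
    have "\<bar>(Ss n x - pi * x / 4) - (Ss n 0 - pi * 0 / 4)\<bar> \<le> e n * \<bar>x\<bar>"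
    proof (rule mvt_bound[where F' = "\<lambda>t. Ps n t - pi / 4" and r = "\<bar>x\<bar>"])
      show "((\<lambda>t. Ss n t - pi * t / 4) has_real_derivative Ps n t - pi / 4) (at t)" for t
        by (auto intro!: derivative_eq_intros Ss_deriv)
      show "\<bar>Ps n t - pi / 4\<bar> \<le> e n" if "\<bar>t\<bar> \<le> \<bar>x\<bar>" for t
        using Ps_bound[OF x that n] unfolding e_def C_def by linarith
    qed simp
    moreover have "Ss n 0 = 0" by (simp add: Ss_def)
    ultimately show ?thesis by simp
  qed
  have "(\<lambda>n. Ss n x - pi * x / 4) \<longlonglongrightarrow> 0"
  proof (rule Lim_null_comparison)
    show "\<forall>\<^sub>F n in sequentially. norm (Ss n x - pi * x / 4) \<le> e n * \<bar>x\<bar>"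
      using b by (auto simp: eventually_sequentially intro!: exI[of _ 1])
    show "(\<lambda>n. e n * \<bar>x\<bar>) \<longlonglongrightarrow> 0" using tendsto_mult_left_zero[OF e0] by simp
  qed
  then show ?thesis by (simp add: LIM_zero_iff)
qed

definition gm :: "real \<Rightarrow> real \<Rightarrow> real" where
  "gm e \<xi> = exp (- 2 * pi\<^sup>2 * e\<^sup>2 * \<xi>\<^sup>2)"

lemma gm_eq: "gm e \<xi> = sqrt (2 * pi) * std_normal_density (0 + (2 * pi * e) * \<xi>)"
  by (simp add: gm_def std_normal_density_def power_mult_distrib)

lemma gm_pos: "0 < gm e \<xi>" by (simp add: gm_def)
lemma gm_le1: "gm e \<xi> \<le> 1" by (simp add: gm_def)
lemma gm_meas[measurable]: "gm e \<in> borel_measurable borel" unfolding gm_def by measurable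

lemma integrable_gm: assumes "e > 0" shows "integrable lborel (gm e)"
proof -
  have "integrable lborel (\<lambda>\<xi>. std_normal_density (0 + (2 * pi * e) * \<xi>))"
    using assms by (intro lborel_integrable_real_affine) auto
  then show ?thesis unfolding gm_eq by (intro integrable_mult_right)
qed

lemma gauss_ft:
  assumes e: "e > 0"
  shows "(\<integral>\<xi>. complex_of_real (gm e \<xi>) * cis (2 * pi * \<xi> * y) \<partial>lborel)
       = complex_of_real (std_normal_density (y / e) / e)"
proof -
  define G where "G x = std_normal_density x *\<^sub>R cis ((y / e) * x)" for x
  have c: "char std_normal_distribution (y / e) = (\<integral>x. G x \<partial>lborel)"
    unfolding char_def G_def cis_conv_exp
    by (subst integral_density) auto
  have ce: "2 * pi * e \<noteq> 0" using e by simp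
  have "(\<integral>x. G x \<partial>lborel) = \<bar>2 * pi * e\<bar> *\<^sub>R (\<integral>\<xi>. G (0 + (2 * pi * e) * \<xi>) \<partial>lborel)"
    by (rule lborel_integral_real_affine[OF ce])
  moreover have "G (0 + (2 * pi * e) * \<xi>) = complex_of_real (1 / sqrt (2 * pi)) * (complex_of_real (gm e \<xi>) * cis (2 * pi * \<xi> * y))" for \<xi>
    unfolding G_def gm_eq using e by (simp add: scaleR_conv_of_real field_simps)
  ultimately have "(\<integral>x. G x \<partial>lborel) = complex_of_real (2 * pi * e) * (complex_of_real (1 / sqrt (2 * pi)) *
      (\<integral>\<xi>. complex_of_real (gm e \<xi>) * cis (2 * pi * \<xi> * y) \<partial>lborel))"
    using e by (simp add: scaleR_conv_of_real)
  moreover have "(\<integral>x. G x \<partial>lborel) = complex_of_real (exp (- ((y / e)^2) / 2))"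
    using c char_std_normal_distribution by simp
  ultimately have "complex_of_real (2 * pi * e / sqrt (2 * pi)) * (\<integral>\<xi>. complex_of_real (gm e \<xi>) * cis (2 * pi * \<xi> * y) \<partial>lborel)
     = complex_of_real (exp (- ((y / e)^2) / 2))" by (simp add: mult.assoc)
  moreover have "2 * pi * e / sqrt (2 * pi) \<noteq> 0" using e by simp
  ultimately have "(\<integral>\<xi>. complex_of_real (gm e \<xi>) * cis (2 * pi * \<xi> * y) \<partial>lborel)
     = complex_of_real (exp (- ((y / e)^2) / 2) / (2 * pi * e / sqrt (2 * pi)))"
    by (simp add: field_simps)
  also have "exp (- ((y / e)^2) / 2) / (2 * pi * e / sqrt (2 * pi)) = std_normal_density (y / e) / e"
  proof -
    have s: "sqrt (2 * pi) * sqrt (2 * pi) = 2 * pi" by simp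
    show ?thesis unfolding std_normal_density_def using e
      by (simp add: field_simps)
  qed
  finally show ?thesis .
qed


lemma cis_meas[measurable]: "cis \<in> borel_measurable borel"
  by (intro borel_measurable_continuous_onI continuous_intros)

locale bls =
  fixes f :: "real \<Rightarrow> real" and \<sigma> A :: real
  assumes sp: "\<sigma> > 0" and Ap: "A > 0" and fc: "continuous_on UNIV f"
    and fbl: "bandlimited \<sigma> f" and fb: "\<And>t. \<bar>f t\<bar> \<le> A / (1 + t\<^sup>2)"
begin

definition "c = \<sigma> / (2 * pi)"
definition "L = (\<integral>t. \<bar>f t\<bar> \<partial>lborel)"

lemma cpos: "c > 0" using sp by (simp add: c_def)

lemma f_meas[measurable]: "f \<in> borel_measurable borel"
  using fc by (rule borel_measurable_continuous_onI)

lemma int_inv: "integrable lborel (\<lambda>x::real. inverse (1 + x\<^sup>2))"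
  using integrable_inverse_1_plus_square by (simp add: einterval_eq_UNIV set_integrable_def)

lemma f_int: "integrable lborel f"
proof (rule Bochner_Integration.integrable_bound)
  show "integrable lborel (\<lambda>x. A * inverse (1 + x\<^sup>2))" using int_inv by simp
  show "AE x in lborel. norm (f x) \<le> norm (A * inverse (1 + x\<^sup>2))"
    using fb Ap by (auto simp: divide_inverse abs_mult)
qed simp

lemma f_le: "\<bar>f t\<bar> \<le> A"
proof -
  have "0 < 1 + t\<^sup>2" by (simp add: add_pos_nonneg)
  then have "A / (1 + t\<^sup>2) \<le> A" using Ap by (simp add: divide_le_eq)
  then show ?thesis using fb[of t] by linarith
qed

lemma Fh_meas[measurable]: "fourier_transform f \<in> borel_measurable borel"
  unfolding fourier_transform_def[abs_def] by measurable

lemma Fh_bound: "norm (fourier_transform f \<xi>) \<le> L"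
proof -
  have "norm (fourier_transform f \<xi>) \<le> (\<integral>t. norm (complex_of_real (f t) * cis (- 2 * pi * \<xi> * t)) \<partial>lborel)"
    unfolding fourier_transform_def by (rule integral_norm_bound)
  also have "\<dots> = L" unfolding L_def by (simp add: norm_mult)
  finally show ?thesis .
qed

lemma Fh_zero: "\<bar>\<xi>\<bar> > c \<Longrightarrow> fourier_transform f \<xi> = 0"
  using fbl unfolding bandlimited_def c_def by auto

lemma Fh_bound_ind: "norm (fourier_transform f \<xi>) \<le> L * indicator {-c..c} \<xi>"
  using Fh_bound[of \<xi>] Fh_zero[of \<xi>] by (auto simp: indicator_def abs_le_iff)

lemma L_nonneg: "L \<ge> 0" unfolding L_def by simp


lemma ind_int: "integrable lborel (\<lambda>x::real. indicator {a..b} x :: real)"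
  using borel_integrable_atLeastAtMost[of a b "\<lambda>_. 1::real"] by simp

lemma fcont: "isCont f x"
  using fc by (simp add: continuous_on_eq_continuous_at)

lemma stepA:
  assumes e: "e > 0"
  shows "(\<integral>\<xi>. fourier_transform f \<xi> * (complex_of_real (gm e \<xi>) * cis (2 * pi * \<xi> * t)) \<partial>lborel)
       = (\<integral>u. complex_of_real (f (t - e * u) * std_normal_density u) \<partial>lborel)"
proof -
  define H where "H \<xi> s = complex_of_real (f s) * cis (- 2 * pi * \<xi> * s) * (complex_of_real (gm e \<xi>) * cis (2 * pi * \<xi> * t))" for \<xi> s
  have Hm[measurable]: "(\<lambda>(\<xi>, s). H \<xi> s) \<in> borel_measurable (lborel \<Otimes>\<^sub>M lborel)"
    unfolding H_def by measurable
  have nH: "norm (H \<xi> s) = gm e \<xi> * \<bar>f s\<bar>" for \<xi> s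
    unfolding H_def using gm_pos[of e \<xi>] by (simp add: norm_mult)
  have Hint: "integrable (lborel \<Otimes>\<^sub>M lborel) (\<lambda>(\<xi>, s). H \<xi> s)"
  proof (rule lborel_pair.Fubini_integrable)
    show "integrable lborel (\<lambda>\<xi>. \<integral>s. norm (case (\<xi>, s) of (\<xi>, s) \<Rightarrow> H \<xi> s) \<partial>lborel)"
      using integrable_gm[OF e] by (simp add: nH L_def[symmetric])
    show "AE \<xi> in lborel. integrable lborel (\<lambda>s. case (\<xi>, s) of (\<xi>, s) \<Rightarrow> H \<xi> s)"
    proof (intro AE_I2)
      fix \<xi>
      show "integrable lborel (\<lambda>s. case (\<xi>, s) of (\<xi>, s) \<Rightarrow> H \<xi> s)"
      proof (rule Bochner_Integration.integrable_bound)
        show "integrable lborel (\<lambda>s. gm e \<xi> * f s)" using f_int by simp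
        show "AE s in lborel. norm (case (\<xi>, s) of (\<xi>, s) \<Rightarrow> H \<xi> s) \<le> norm (gm e \<xi> * f s)"
          using gm_pos[of e \<xi>] by (simp add: nH abs_mult)
      qed simp
    qed
  qed simp
  have "(\<integral>\<xi>. fourier_transform f \<xi> * (complex_of_real (gm e \<xi>) * cis (2 * pi * \<xi> * t)) \<partial>lborel)
      = (\<integral>\<xi>. (\<integral>s. H \<xi> s \<partial>lborel) \<partial>lborel)"
    unfolding fourier_transform_def H_def by simp
  also have "\<dots> = (\<integral>s. (\<integral>\<xi>. H \<xi> s \<partial>lborel) \<partial>lborel)"
    using lborel_pair.Fubini_integral[OF Hint] by simp
  also have "\<dots> = (\<integral>s. complex_of_real (f s * (std_normal_density ((t - s) / e) / e)) \<partial>lborel)"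
  proof (intro Bochner_Integration.integral_cong refl)
    fix s
    have "H \<xi> s = complex_of_real (f s) * (complex_of_real (gm e \<xi>) * cis (2 * pi * \<xi> * (t - s)))" for \<xi>
    proof -
      have cm: "cis (- 2 * pi * \<xi> * s) * cis (2 * pi * \<xi> * t) = cis (2 * pi * \<xi> * (t - s))"
        by (simp add: cis_mult algebra_simps)
      show ?thesis unfolding H_def cm[symmetric] by (simp add: mult_ac)
    qed
    then show "(\<integral>\<xi>. H \<xi> s \<partial>lborel) = complex_of_real (f s * (std_normal_density ((t - s) / e) / e))"
      using gauss_ft[OF e, of "t - s"] by simp
  qed
  also have "\<dots> = \<bar>- e\<bar> *\<^sub>R (\<integral>u. complex_of_real (f (t + (- e) * u) * (std_normal_density ((t - (t + (- e) * u)) / e) / e)) \<partial>lborel)"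
    using e by (intro lborel_integral_real_affine) simp
  also have "\<dots> = (\<integral>u. complex_of_real (f (t - e * u) * std_normal_density u) \<partial>lborel)"
    using e by (simp add: scaleR_conv_of_real)
  finally show ?thesis .
qed

lemma inversion: "complex_of_real (f t) = (\<integral>\<xi>. fourier_transform f \<xi> * cis (2 * pi * \<xi> * t) \<partial>lborel)"
proof -
  define e where "e n = 1 / (real n + 1)" for n
  have ep: "e n > 0" for n unfolding e_def by simp
  have e0: "e \<longlonglongrightarrow> 0" unfolding e_def by real_asymp
  have B: "(\<lambda>n. (\<integral>\<xi>. fourier_transform f \<xi> * (complex_of_real (gm (e n) \<xi>) * cis (2 * pi * \<xi> * t)) \<partial>lborel))
      \<longlonglongrightarrow> (\<integral>\<xi>. fourier_transform f \<xi> * cis (2 * pi * \<xi> * t) \<partial>lborel)"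
  proof (rule integral_dominated_convergence[where w = "\<lambda>\<xi>. L * indicator {-c..c} \<xi>"])
    show "integrable lborel (\<lambda>\<xi>. L * indicator {-c..c} \<xi>)" using ind_int by simp
    show "AE \<xi> in lborel. (\<lambda>n. fourier_transform f \<xi> * (complex_of_real (gm (e n) \<xi>) * cis (2 * pi * \<xi> * t)))
        \<longlonglongrightarrow> fourier_transform f \<xi> * cis (2 * pi * \<xi> * t)"
    proof (intro AE_I2)
      fix \<xi>
      have "(\<lambda>n. gm (e n) \<xi>) \<longlonglongrightarrow> exp (- 2 * pi\<^sup>2 * 0\<^sup>2 * \<xi>\<^sup>2)"
        unfolding gm_def by (intro tendsto_intros e0)
      then have "(\<lambda>n. gm (e n) \<xi>) \<longlonglongrightarrow> 1" by simp
      from tendsto_of_real[OF this, where 'a=complex]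
      have "(\<lambda>n. complex_of_real (gm (e n) \<xi>)) \<longlonglongrightarrow> 1" by simp
      then show "(\<lambda>n. fourier_transform f \<xi> * (complex_of_real (gm (e n) \<xi>) * cis (2 * pi * \<xi> * t)))
        \<longlonglongrightarrow> fourier_transform f \<xi> * cis (2 * pi * \<xi> * t)"
        using tendsto_mult[OF tendsto_const[of "fourier_transform f \<xi>"] tendsto_mult[OF _ tendsto_const[of "cis (2 * pi * \<xi> * t)"]]]
        by fastforce
    qed
    show "AE \<xi> in lborel. norm (fourier_transform f \<xi> * (complex_of_real (gm (e n) \<xi>) * cis (2 * pi * \<xi> * t))) \<le> L * indicator {-c..c} \<xi>" for n
    proof (intro AE_I2)
      fix \<xi>
      have "norm (fourier_transform f \<xi> * (complex_of_real (gm (e n) \<xi>) * cis (2 * pi * \<xi> * t)))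
         = norm (fourier_transform f \<xi>) * gm (e n) \<xi>"
        using gm_pos[of "e n" \<xi>] by (simp add: norm_mult)
      also have "\<dots> \<le> norm (fourier_transform f \<xi>) * 1"
        using gm_le1 by (intro mult_left_mono) auto
      also have "\<dots> \<le> L * indicator {-c..c} \<xi>" using Fh_bound_ind by simp
      finally show "norm (fourier_transform f \<xi> * (complex_of_real (gm (e n) \<xi>) * cis (2 * pi * \<xi> * t))) \<le> L * indicator {-c..c} \<xi>" .
    qed
  qed simp_all
  have C: "(\<lambda>n. (\<integral>u. complex_of_real (f (t - e n * u) * std_normal_density u) \<partial>lborel))
      \<longlonglongrightarrow> (\<integral>u. complex_of_real (f t * std_normal_density u) \<partial>lborel)"
  proof (rule integral_dominated_convergence[where w = "\<lambda>u. A * std_normal_density u"])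
    show "integrable lborel (\<lambda>u. A * std_normal_density u)" by simp
    show "AE u in lborel. (\<lambda>n. complex_of_real (f (t - e n * u) * std_normal_density u))
        \<longlonglongrightarrow> complex_of_real (f t * std_normal_density u)"
    proof (intro AE_I2)
      fix u
      have "(\<lambda>n. t - e n * u) \<longlonglongrightarrow> t - 0 * u" by (intro tendsto_intros e0)
      then have "(\<lambda>n. f (t - e n * u)) \<longlonglongrightarrow> f t"
        using isCont_tendsto_compose[OF fcont] by simp
      then show "(\<lambda>n. complex_of_real (f (t - e n * u) * std_normal_density u))
        \<longlonglongrightarrow> complex_of_real (f t * std_normal_density u)"
        by (intro tendsto_intros)
    qed
    show "AE u in lborel. norm (complex_of_real (f (t - e n * u) * std_normal_density u)) \<le> A * std_normal_density u" for n
      using f_le by (intro AE_I2) (auto simp: norm_mult intro!: mult_right_mono)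
  qed simp_all
  have "(\<integral>u. complex_of_real (f t * std_normal_density u) \<partial>lborel) = complex_of_real (f t)"
    by (simp add: integral_of_real[symmetric] del: integral_of_real)
  then have C': "(\<lambda>n. (\<integral>\<xi>. fourier_transform f \<xi> * (complex_of_real (gm (e n) \<xi>) * cis (2 * pi * \<xi> * t)) \<partial>lborel))
      \<longlonglongrightarrow> complex_of_real (f t)"
    using C stepA[OF ep] by simp
  show ?thesis using LIMSEQ_unique[OF C' B] .
qed

end

context bls begin

lemma Fh_int:
  assumes km[measurable]: "k \<in> borel_measurable borel" and kb: "\<And>\<xi>. \<bar>\<xi>\<bar> \<le> c \<Longrightarrow> norm (k \<xi>) \<le> B"
  shows "integrable lborel (\<lambda>\<xi>. fourier_transform f \<xi> * k \<xi>)"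
proof (rule Bochner_Integration.integrable_bound)
  show "integrable lborel (\<lambda>\<xi>. (L * \<bar>B\<bar>) * indicator {-c..c} \<xi>)" using ind_int by simp
  show "AE \<xi> in lborel. norm (fourier_transform f \<xi> * k \<xi>) \<le> norm ((L * \<bar>B\<bar>) * indicator {-c..c} \<xi>)"
  proof (intro AE_I2)
    fix \<xi>
    show "norm (fourier_transform f \<xi> * k \<xi>) \<le> norm ((L * \<bar>B\<bar>) * indicator {-c..c} \<xi>)"
    proof (cases "\<bar>\<xi>\<bar> \<le> c")
      case True
      then have "norm (fourier_transform f \<xi> * k \<xi>) \<le> L * \<bar>B\<bar>"
        unfolding norm_mult using Fh_bound[of \<xi>] kb[OF True] L_nonneg
        by (intro mult_mono) auto
      then show ?thesis using True L_nonneg by (auto simp: indicator_def abs_le_iff abs_mult)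
    next
      case False then show ?thesis using Fh_zero[of \<xi>] by simp
    qed
  qed
qed simp

lemma dct_Fh:
  assumes km[measurable]: "\<And>i. k i \<in> borel_measurable borel" and k0m[measurable]: "k0 \<in> borel_measurable borel"
    and kb: "\<And>i \<xi>. \<bar>\<xi>\<bar> \<le> c \<Longrightarrow> norm (k i \<xi>) \<le> B"
    and kl: "\<And>\<xi>. \<bar>\<xi>\<bar> < c \<Longrightarrow> (\<lambda>i. k i \<xi>) \<longlonglongrightarrow> k0 \<xi>"
  shows "(\<lambda>i. \<integral>\<xi>. fourier_transform f \<xi> * k i \<xi> \<partial>lborel) \<longlonglongrightarrow> (\<integral>\<xi>. fourier_transform f \<xi> * k0 \<xi> \<partial>lborel)"
proof (rule integral_dominated_convergence[where w = "\<lambda>\<xi>. (L * \<bar>B\<bar>) * indicator {-c..c} \<xi>"])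
  show "integrable lborel (\<lambda>\<xi>. (L * \<bar>B\<bar>) * indicator {-c..c} \<xi>)" using ind_int by simp
  show "AE \<xi> in lborel. (\<lambda>i. fourier_transform f \<xi> * k i \<xi>) \<longlonglongrightarrow> fourier_transform f \<xi> * k0 \<xi>"
    using AE_lborel_singleton[of c] AE_lborel_singleton[of "-c"]
  proof eventually_elim
    case (elim \<xi>)
    show ?case
    proof (cases "\<bar>\<xi>\<bar> < c")
      case True then show ?thesis using kl[OF True] by (intro tendsto_intros)
    next
      case False
      with elim have "\<bar>\<xi>\<bar> > c" by auto
      then show ?thesis using Fh_zero[of \<xi>] by simp
    qed
  qed
  show "AE \<xi> in lborel. norm (fourier_transform f \<xi> * k i \<xi>) \<le> (L * \<bar>B\<bar>) * indicator {-c..c} \<xi>" for i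
  proof (intro AE_I2)
    fix \<xi>
    show "norm (fourier_transform f \<xi> * k i \<xi>) \<le> (L * \<bar>B\<bar>) * indicator {-c..c} \<xi>"
    proof (cases "\<bar>\<xi>\<bar> \<le> c")
      case True
      then have "norm (fourier_transform f \<xi> * k i \<xi>) \<le> L * \<bar>B\<bar>"
        unfolding norm_mult using Fh_bound[of \<xi>] order_trans[OF kb[OF True] abs_ge_self] L_nonneg
        by (intro mult_mono) auto
      then show ?thesis using True by (auto simp: indicator_def abs_le_iff)
    next
      case False then show ?thesis using Fh_zero[of \<xi>] L_nonneg by simp
    qed
  qed
qed simp_all

definition D :: "real \<Rightarrow> complex" where
  "D t = (\<integral>\<xi>. fourier_transform f \<xi> * (\<i> * complex_of_real (2 * pi * \<xi>) * cis (2 * pi * \<xi> * t)) \<partial>lborel)"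

lemma cis_diff_bound: "norm (cis a - cis b) \<le> \<bar>a - b\<bar>"
proof -
  have "cis a - cis b = cis b * (cis (a - b) - 1)" by (simp add: algebra_simps cis_mult)
  moreover have "norm (cis (a - b) - 1) \<le> \<bar>a - b\<bar>"
    using iexp_approx1[of "a - b" 0] by (simp add: cis_conv_exp)
  ultimately show ?thesis by (simp add: norm_mult)
qed

lemma f_deriv: "(f has_real_derivative Re (D t)) (at t)"
proof -
  have "((\<lambda>y. (f y - f t) / (y - t)) \<longlongrightarrow> Re (D t)) (at t)"
  proof (unfold tendsto_at_iff_sequentially comp_def, intro allI impI)
    fix X :: "nat \<Rightarrow> real" assume X: "\<forall>i. X i \<in> UNIV - {t}" "X \<longlonglongrightarrow> t"
    have Xne: "X i - t \<noteq> 0" for i using X(1) by auto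
    define k where "k i \<xi> = (cis (2 * pi * \<xi> * X i) - cis (2 * pi * \<xi> * t)) / complex_of_real (X i - t)" for i \<xi>
    have eq: "complex_of_real ((f (X i) - f t) / (X i - t)) = (\<integral>\<xi>. fourier_transform f \<xi> * k i \<xi> \<partial>lborel)" for i
    proof -
      have i1: "integrable lborel (\<lambda>\<xi>. fourier_transform f \<xi> * cis (2 * pi * \<xi> * s))" for s
        by (rule Fh_int[where B = 1]) auto
      have "complex_of_real ((f (X i) - f t) / (X i - t))
          = ((\<integral>\<xi>. fourier_transform f \<xi> * cis (2 * pi * \<xi> * X i) \<partial>lborel)
             - (\<integral>\<xi>. fourier_transform f \<xi> * cis (2 * pi * \<xi> * t) \<partial>lborel)) / complex_of_real (X i - t)"
        by (simp add: inversion[symmetric])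
      also have "\<dots> = (\<integral>\<xi>. (fourier_transform f \<xi> * cis (2 * pi * \<xi> * X i) - fourier_transform f \<xi> * cis (2 * pi * \<xi> * t)) / complex_of_real (X i - t) \<partial>lborel)"
        using i1 by simp
      also have "\<dots> = (\<integral>\<xi>. fourier_transform f \<xi> * k i \<xi> \<partial>lborel)"
        unfolding k_def by (simp add: algebra_simps)
      finally show ?thesis .
    qed
    have lim: "(\<lambda>i. \<integral>\<xi>. fourier_transform f \<xi> * k i \<xi> \<partial>lborel) \<longlonglongrightarrow> D t"
      unfolding D_def
    proof (rule dct_Fh[where B = "2 * pi * c"])
      show "k i \<in> borel_measurable borel" for i unfolding k_def by measurable
      show "(\<lambda>\<xi>. \<i> * complex_of_real (2 * pi * \<xi>) * cis (2 * pi * \<xi> * t)) \<in> borel_measurable borel" by measurable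
      show "norm (k i \<xi>) \<le> 2 * pi * c" if "\<bar>\<xi>\<bar> \<le> c" for i \<xi>
      proof -
        have "norm (k i \<xi>) = norm (cis (2 * pi * \<xi> * X i) - cis (2 * pi * \<xi> * t)) / \<bar>X i - t\<bar>"
          unfolding k_def by (simp add: norm_divide del: of_real_diff)
        also have "\<dots> \<le> \<bar>2 * pi * \<xi> * X i - 2 * pi * \<xi> * t\<bar> / \<bar>X i - t\<bar>"
          by (intro divide_right_mono cis_diff_bound) auto
        also have "\<dots> = 2 * pi * \<bar>\<xi>\<bar>"
          using Xne by (simp add: abs_mult right_diff_distrib[symmetric] mult.assoc)
        also have "\<dots> \<le> 2 * pi * c" using that by simp
        finally show ?thesis .
      qed
      show "(\<lambda>i. k i \<xi>) \<longlonglongrightarrow> \<i> * complex_of_real (2 * pi * \<xi>) * cis (2 * pi * \<xi> * t)" for \<xi>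
      proof -
        define g where "g z = exp (\<i> * complex_of_real (2 * pi * \<xi>) * z)" for z
        have "(g has_field_derivative (\<i> * complex_of_real (2 * pi * \<xi>) * g (complex_of_real t))) (at (complex_of_real t))"
          unfolding g_def by (auto intro!: derivative_eq_intros)
        then have l1: "((\<lambda>z. (g z - g (complex_of_real t)) / (z - complex_of_real t)) \<longlongrightarrow> \<i> * complex_of_real (2 * pi * \<xi>) * g (complex_of_real t)) (at (complex_of_real t))"
          by (simp add: has_field_derivative_iff)
        have a1: "(\<lambda>i. complex_of_real (X i)) \<longlonglongrightarrow> complex_of_real t" using X(2) by (intro tendsto_intros)
        have a2: "\<And>i. complex_of_real (X i) \<in> UNIV - {complex_of_real t}" using X(1) by auto
        have "(\<lambda>i. (g (complex_of_real (X i)) - g (complex_of_real t)) / (complex_of_real (X i) - complex_of_real t)) \<longlonglongrightarrow> \<i> * complex_of_real (2 * pi * \<xi>) * g (complex_of_real t)"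
          using l1[unfolded tendsto_at_iff_sequentially comp_def, rule_format, OF a2 a1] .
        moreover have "g (complex_of_real s) = cis (2 * pi * \<xi> * s)" for s
          unfolding g_def cis_conv_exp by (simp add: mult_ac)
        ultimately show ?thesis unfolding k_def by simp
      qed
    qed
    have "(\<lambda>i. Re (complex_of_real ((f (X i) - f t) / (X i - t)))) \<longlonglongrightarrow> Re (D t)"
      using tendsto_Re[OF lim] unfolding eq[symmetric] .
    then show "(\<lambda>i. (f (X i) - f t) / (X i - t)) \<longlonglongrightarrow> Re (D t)" by simp
  qed
  then show ?thesis by (simp add: has_field_derivative_iff)
qed


lemma D_cont: "isCont D t"
proof (unfold continuous_at_sequentially comp_def, intro allI impI)
  fix X :: "nat \<Rightarrow> real" assume X: "X \<longlonglongrightarrow> t"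
  show "(\<lambda>i. D (X i)) \<longlonglongrightarrow> D t"
    unfolding D_def
  proof (rule dct_Fh[where B = "2 * pi * c"])
    show "(\<lambda>\<xi>. \<i> * complex_of_real (2 * pi * \<xi>) * cis (2 * pi * \<xi> * X i)) \<in> borel_measurable borel" for i
      by measurable
    show "(\<lambda>\<xi>. \<i> * complex_of_real (2 * pi * \<xi>) * cis (2 * pi * \<xi> * t)) \<in> borel_measurable borel"
      by measurable
    show "norm (\<i> * complex_of_real (2 * pi * \<xi>) * cis (2 * pi * \<xi> * X i)) \<le> 2 * pi * c" if "\<bar>\<xi>\<bar> \<le> c" for i \<xi>
      using that by (simp add: norm_mult abs_mult)
    show "(\<lambda>i. \<i> * complex_of_real (2 * pi * \<xi>) * cis (2 * pi * \<xi> * X i)) \<longlonglongrightarrow> \<i> * complex_of_real (2 * pi * \<xi>) * cis (2 * pi * \<xi> * t)" for \<xi>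
      by (intro tendsto_intros X)
  qed
qed

lemma cis_sin: "complex_of_real (2 * sin y) * \<i> * cis z = cis (z + y) - cis (z - y)"
  by (simp add: complex_eq_iff cos_add sin_add cos_diff sin_diff algebra_simps)

lemma Ss_abs: "\<bar>Ss n x\<bar> \<le> pi\<^sup>2 / 8"
proof -
  have "\<bar>Ss n x\<bar> \<le> (\<Sum>k<n. \<bar>(-1)^k * sin ((2 * real k + 1) * x) / (2 * real k + 1)^2\<bar>)"
    unfolding Ss_def by (rule sum_abs)
  also have "\<dots> \<le> (\<Sum>k<n. 1 / (2 * real k + 1)^2)"
    by (intro sum_mono) (simp add: abs_mult divide_right_mono)
  also have "\<dots> \<le> pi\<^sup>2 / 8"
    using sum_le_suminf[OF sums_summable[OF odd_sq_sums], of "{..<n}"] sums_unique[OF odd_sq_sums] by simp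
  finally show ?thesis .
qed

lemma D_bound: "norm (D t) \<le> \<sigma> * A"
proof -
  define \<theta> where "\<theta> \<xi> = pi * \<xi> / (2 * c)" for \<xi>
  define \<tau> where "\<tau> j = (2 * real j + 1) / (4 * c)" for j
  define a where "a j = complex_of_real (4 * \<sigma> / pi\<^sup>2 * ((-1)^j / (2 * real j + 1)^2))" for j
  define k where "k n \<xi> = \<i> * complex_of_real (8 * \<sigma> / pi\<^sup>2 * Ss n (\<theta> \<xi>)) * cis (2 * pi * \<xi> * t)" for n \<xi>
  have c2: "\<sigma> = 2 * pi * c" unfolding c_def by simp
  have lim: "(\<lambda>n. \<integral>\<xi>. fourier_transform f \<xi> * k n \<xi> \<partial>lborel) \<longlonglongrightarrow> D t"
    unfolding D_def
  proof (rule dct_Fh[where B = "\<sigma>"])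
    show "k n \<in> borel_measurable borel" for n unfolding k_def \<theta>_def Ss_def by measurable
    show "(\<lambda>\<xi>. \<i> * complex_of_real (2 * pi * \<xi>) * cis (2 * pi * \<xi> * t)) \<in> borel_measurable borel" by measurable
    show "norm (k n \<xi>) \<le> \<sigma>" for n \<xi>
    proof -
      have "norm (k n \<xi>) = 8 * \<sigma> / pi\<^sup>2 * \<bar>Ss n (\<theta> \<xi>)\<bar>"
        unfolding k_def norm_mult norm_of_real using sp by (simp add: abs_mult)
      also have "\<dots> \<le> 8 * \<sigma> / pi\<^sup>2 * (pi\<^sup>2 / 8)"
        using sp by (intro mult_left_mono Ss_abs) auto
      finally show ?thesis by simp
    qed
    show "(\<lambda>n. k n \<xi>) \<longlonglongrightarrow> \<i> * complex_of_real (2 * pi * \<xi>) * cis (2 * pi * \<xi> * t)" if "\<bar>\<xi>\<bar> < c" for \<xi>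
    proof -
      have "\<bar>\<theta> \<xi>\<bar> < pi / 2"
        using that cpos unfolding \<theta>_def by (simp add: abs_mult field_simps)
      then have "(\<lambda>n. Ss n (\<theta> \<xi>)) \<longlonglongrightarrow> pi * \<theta> \<xi> / 4" by (rule Ss_lim)
      then have "(\<lambda>n. complex_of_real (8 * \<sigma> / pi\<^sup>2 * Ss n (\<theta> \<xi>))) \<longlonglongrightarrow> complex_of_real (8 * \<sigma> / pi\<^sup>2 * (pi * \<theta> \<xi> / 4))"
        by (rule tendsto_of_real[OF tendsto_mult_left])
      then have l: "(\<lambda>n. k n \<xi>) \<longlonglongrightarrow> \<i> * complex_of_real (8 * \<sigma> / pi\<^sup>2 * (pi * \<theta> \<xi> / 4)) * cis (2 * pi * \<xi> * t)"
        unfolding k_def by (rule tendsto_mult_right[OF tendsto_mult_left])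
      have e: "8 * \<sigma> / pi\<^sup>2 * (pi * \<theta> \<xi> / 4) = 2 * pi * \<xi>"
        unfolding \<theta>_def c_def using sp by (simp add: field_simps power2_eq_square)
      show ?thesis using l unfolding e .
    qed
  qed
  have keq: "k n \<xi> = (\<Sum>j<n. a j * (cis (2 * pi * \<xi> * (t + \<tau> j)) - cis (2 * pi * \<xi> * (t - \<tau> j))))" for n \<xi>
  proof -
    have "k n \<xi> = (\<Sum>j<n. \<i> * complex_of_real (8 * \<sigma> / pi\<^sup>2 * ((-1)^j * sin ((2 * real j + 1) * \<theta> \<xi>) / (2 * real j + 1)^2)) * cis (2 * pi * \<xi> * t))"
      unfolding k_def Ss_def by (simp add: sum_distrib_left sum_distrib_right)
    also have "\<dots> = (\<Sum>j<n. a j * (cis (2 * pi * \<xi> * (t + \<tau> j)) - cis (2 * pi * \<xi> * (t - \<tau> j))))"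
    proof (intro sum.cong refl)
      fix j
      have y: "2 * pi * \<xi> * (t + \<tau> j) = 2 * pi * \<xi> * t + (2 * real j + 1) * \<theta> \<xi>"
           "2 * pi * \<xi> * (t - \<tau> j) = 2 * pi * \<xi> * t - (2 * real j + 1) * \<theta> \<xi>"
        unfolding \<theta>_def \<tau>_def using cpos by (simp_all add: field_simps)
      show "\<i> * complex_of_real (8 * \<sigma> / pi\<^sup>2 * ((-1)^j * sin ((2 * real j + 1) * \<theta> \<xi>) / (2 * real j + 1)^2)) * cis (2 * pi * \<xi> * t)
          = a j * (cis (2 * pi * \<xi> * (t + \<tau> j)) - cis (2 * pi * \<xi> * (t - \<tau> j)))"
        unfolding y cis_sin[symmetric] a_def by (simp add: field_simps)
    qed
    finally show ?thesis .
  qed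
  have ieq: "(\<integral>\<xi>. fourier_transform f \<xi> * k n \<xi> \<partial>lborel)
      = (\<Sum>j<n. a j * complex_of_real (f (t + \<tau> j) - f (t - \<tau> j)))" for n
  proof -
    have i1: "integrable lborel (\<lambda>\<xi>. fourier_transform f \<xi> * cis (2 * pi * \<xi> * s))" for s
      by (rule Fh_int[where B = 1]) auto
    have "(\<integral>\<xi>. fourier_transform f \<xi> * k n \<xi> \<partial>lborel)
       = (\<integral>\<xi>. (\<Sum>j<n. a j * (fourier_transform f \<xi> * cis (2 * pi * \<xi> * (t + \<tau> j)))
                      - a j * (fourier_transform f \<xi> * cis (2 * pi * \<xi> * (t - \<tau> j)))) \<partial>lborel)"
      unfolding keq by (simp add: sum_distrib_left algebra_simps)
    also have "\<dots> = (\<Sum>j<n. \<integral>\<xi>. a j * (fourier_transform f \<xi> * cis (2 * pi * \<xi> * (t + \<tau> j)))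
                      - a j * (fourier_transform f \<xi> * cis (2 * pi * \<xi> * (t - \<tau> j))) \<partial>lborel)"
      by (intro Bochner_Integration.integral_sum Bochner_Integration.integrable_diff integrable_mult_right i1)
    also have "\<dots> = (\<Sum>j<n. a j * complex_of_real (f (t + \<tau> j) - f (t - \<tau> j)))"
    proof (intro sum.cong refl)
      fix j
      have "(\<integral>\<xi>. a j * (fourier_transform f \<xi> * cis (2 * pi * \<xi> * (t + \<tau> j)))
                      - a j * (fourier_transform f \<xi> * cis (2 * pi * \<xi> * (t - \<tau> j))) \<partial>lborel)
          = (\<integral>\<xi>. a j * (fourier_transform f \<xi> * cis (2 * pi * \<xi> * (t + \<tau> j))) \<partial>lborel)
           - (\<integral>\<xi>. a j * (fourier_transform f \<xi> * cis (2 * pi * \<xi> * (t - \<tau> j))) \<partial>lborel)"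
        by (intro Bochner_Integration.integral_diff integrable_mult_right i1)
      also have "\<dots> = a j * (\<integral>\<xi>. fourier_transform f \<xi> * cis (2 * pi * \<xi> * (t + \<tau> j)) \<partial>lborel)
           - a j * (\<integral>\<xi>. fourier_transform f \<xi> * cis (2 * pi * \<xi> * (t - \<tau> j)) \<partial>lborel)"
        by simp
      also have "\<dots> = a j * complex_of_real (f (t + \<tau> j)) - a j * complex_of_real (f (t - \<tau> j))"
        by (simp only: inversion[symmetric])
      finally show "(\<integral>\<xi>. a j * (fourier_transform f \<xi> * cis (2 * pi * \<xi> * (t + \<tau> j)))
                      - a j * (fourier_transform f \<xi> * cis (2 * pi * \<xi> * (t - \<tau> j))) \<partial>lborel)
          = a j * complex_of_real (f (t + \<tau> j) - f (t - \<tau> j))"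
        by (simp add: algebra_simps)
    qed
    finally show ?thesis .
  qed
  have nb: "norm (\<integral>\<xi>. fourier_transform f \<xi> * k n \<xi> \<partial>lborel) \<le> \<sigma> * A" for n
  proof -
    have "norm (\<integral>\<xi>. fourier_transform f \<xi> * k n \<xi> \<partial>lborel) \<le> (\<Sum>j<n. norm (a j * complex_of_real (f (t + \<tau> j) - f (t - \<tau> j))))"
      unfolding ieq by (rule norm_sum)
    also have "\<dots> \<le> (\<Sum>j<n. 4 * \<sigma> / pi\<^sup>2 * (1 / (2 * real j + 1)^2) * (2 * A))"
    proof (intro sum_mono)
      fix j
      have d: "\<bar>f (t + \<tau> j) - f (t - \<tau> j)\<bar> \<le> 2 * A" using f_le[of "t + \<tau> j"] f_le[of "t - \<tau> j"] by linarith
      have nj: "norm (a j) = 4 * \<sigma> / pi\<^sup>2 * (1 / (2 * real j + 1)^2)"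
        unfolding a_def norm_of_real using sp by (simp add: abs_mult)
      have K: "0 \<le> 4 * \<sigma> / pi\<^sup>2 * (1 / (2 * real j + 1)^2)" using sp by simp
      show "norm (a j * complex_of_real (f (t + \<tau> j) - f (t - \<tau> j))) \<le> 4 * \<sigma> / pi\<^sup>2 * (1 / (2 * real j + 1)^2) * (2 * A)"
        unfolding norm_mult norm_of_real nj by (rule mult_left_mono[OF d K])
    qed
    also have "\<dots> = 8 * \<sigma> * A / pi\<^sup>2 * (\<Sum>j<n. 1 / (2 * real j + 1)^2)"
      by (simp add: sum_distrib_left sum_distrib_right field_simps)
    also have "\<dots> \<le> 8 * \<sigma> * A / pi\<^sup>2 * (pi\<^sup>2 / 8)"
    proof (intro mult_left_mono)
      show "(\<Sum>j<n. 1 / (2 * real j + 1)^2) \<le> pi\<^sup>2 / 8"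
        using sum_le_suminf[OF sums_summable[OF odd_sq_sums], of "{..<n}"] sums_unique[OF odd_sq_sums] by simp
    qed (use sp Ap in simp)
    also have "\<dots> = \<sigma> * A" by simp
    finally show ?thesis .
  qed
  show ?thesis
    using tendsto_norm[OF lim] nb by (intro LIMSEQ_le_const2) auto
qed

end

definition Phi :: "real \<Rightarrow> real \<Rightarrow> real" where
  "Phi p y = sgn y * \<bar>y\<bar> powr (p + 1) / (p + 1)"

lemma Phi_0: "Phi p 0 = 0" by (simp add: Phi_def)

lemma Phi_deriv:
  assumes p: "p \<ge> 1"
  shows "(Phi p has_real_derivative \<bar>y\<bar> powr p) (at y)"
proof -
  consider "y > 0" | "y < 0" | "y = 0" by linarith
  then show ?thesis
  proof cases
    case 1
    have "((\<lambda>z. z powr (p + 1) / (p + 1)) has_real_derivative ((p + 1) * y powr (p + 1 - 1)) / (p + 1)) (at y)"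
      using 1 by (intro DERIV_cdivide has_real_derivative_powr) auto
    then have d: "((\<lambda>z. z powr (p + 1) / (p + 1)) has_real_derivative \<bar>y\<bar> powr p) (at y)"
      using 1 p by simp
    show ?thesis
      by (rule has_field_derivative_transform_within_open[OF d, of "{0<..}"]) (use 1 in \<open>auto simp: Phi_def\<close>)
  next
    case 2
    have "((\<lambda>z. - ((- z) powr (p + 1) / (p + 1))) has_real_derivative - (((p + 1) * (- y) powr (p + 1 - 1)) * (- 1) / (p + 1))) (at y)"
      using 2 by (auto intro!: derivative_eq_intros DERIV_cdivide DERIV_chain2[OF has_real_derivative_powr])
    then have d: "((\<lambda>z. - ((- z) powr (p + 1) / (p + 1))) has_real_derivative \<bar>y\<bar> powr p) (at y)"
      using 2 p by simp
    show ?thesis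
      by (rule has_field_derivative_transform_within_open[OF d, of "{..<0}"]) (use 2 in \<open>auto simp: Phi_def\<close>)
  next
    case 3
    have e: "(Phi p z - Phi p 0) / z = \<bar>z\<bar> powr p / (p + 1)" if "z \<noteq> 0" for z
    proof -
      have "\<bar>z\<bar> powr (p + 1) = \<bar>z\<bar> powr p * \<bar>z\<bar>" using that by (simp add: powr_add)
      then have "Phi p z = (sgn z * \<bar>z\<bar>) * (\<bar>z\<bar> powr p / (p + 1))" unfolding Phi_def by simp
      then have "Phi p z = z * (\<bar>z\<bar> powr p / (p + 1))" by (simp add: sgn_mult_abs)
      then show ?thesis using that by (simp add: Phi_0)
    qed
    have "((\<lambda>z. \<bar>z\<bar> powr p / (p + 1)) \<longlongrightarrow> 0 / (p + 1)) (at 0)"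
      using p by (intro tendsto_divide tendsto_zero_powrI tendsto_const) (auto intro!: tendsto_eq_intros)
    then have "((\<lambda>z. (Phi p z - Phi p 0) / (z - 0)) \<longlongrightarrow> 0) (at 0)"
      by (subst tendsto_cong[where g = "\<lambda>z. \<bar>z\<bar> powr p / (p + 1)"])
         (auto simp: eventually_at_filter e intro!: always_eventually)
    then show ?thesis using 3 p by (simp add: has_field_derivative_iff)
  qed
qed

lemma Phi_cont: "p \<ge> 1 \<Longrightarrow> isCont (Phi p) y"
  using Phi_deriv by (rule DERIV_isCont)



lemma nn_lim_interval:
  fixes H :: "real \<Rightarrow> real" and a b :: "nat \<Rightarrow> real"
  assumes Hm[measurable]: "H \<in> borel_measurable borel" and H0: "\<And>x. 0 \<le> H x"
    and am: "decseq a" and bm: "incseq b"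
    and al: "filterlim a at_bot sequentially" and bl: "filterlim b at_top sequentially"
  shows "(\<lambda>n. \<integral>\<^sup>+x. ennreal (H x * indicator {a n..b n} x) \<partial>lborel) \<longlonglongrightarrow> (\<integral>\<^sup>+x. ennreal (H x) \<partial>lborel)"
proof (rule nn_integral_LIMSEQ)
  show "incseq (\<lambda>n x. ennreal (H x * indicator {a n..b n} x))"
  proof (intro monoI le_funI ennreal_leI mult_left_mono H0)
    fix m n :: nat and x assume "m \<le> n"
    then have "a n \<le> a m" "b m \<le> b n" using am bm by (auto simp: decseq_def incseq_def)
    then show "indicator {a m..b m} x \<le> (indicator {a n..b n} x :: real)"
      by (auto simp: indicator_def)
  qed
  show "(\<lambda>n. ennreal (H x * indicator {a n..b n} x)) \<longlonglongrightarrow> ennreal (H x)" for x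
  proof (rule tendsto_eventually)
    have "eventually (\<lambda>n. a n \<le> x) sequentially" using al by (simp add: filterlim_at_bot)
    moreover have "eventually (\<lambda>n. x \<le> b n) sequentially" using bl by (simp add: filterlim_at_top)
    ultimately show "eventually (\<lambda>n. ennreal (H x * indicator {a n..b n} x) = ennreal (H x)) sequentially"
      by eventually_elim (simp add: indicator_def)
  qed
qed simp

locale bls2 = bls +
  fixes \<alpha> p :: real
  assumes agt: "\<alpha> > A * \<sigma>" and p1: "1 \<le> p"
begin

definition "fd t = Re (D t)"
definition "g t = \<alpha> * t + f t"

lemma apos: "\<alpha> > 0" using agt sp Ap by (smt (verit) mult_pos_pos)

lemma fd_bound: "\<bar>fd t\<bar> \<le> \<sigma> * A"
  unfolding fd_def using abs_Re_le_cmod[of "D t"] D_bound[of t] by linarith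

lemma fd_cont: "continuous_on UNIV fd"
  unfolding fd_def continuous_on_eq_continuous_at[OF open_UNIV]
  using D_cont by (auto intro!: continuous_intros)

lemma fd_meas[measurable]: "fd \<in> borel_measurable borel"
  using fd_cont by (rule borel_measurable_continuous_onI)

lemma f_deriv': "(f has_real_derivative fd t) (at t)"
  unfolding fd_def by (rule f_deriv)

lemma g_deriv: "(g has_real_derivative \<alpha> + fd t) (at t)"
  unfolding g_def[abs_def] by (auto intro!: derivative_eq_intros f_deriv')

lemma gd_pos: "\<alpha> + fd t > 0"
  using fd_bound[of t] agt by (simp add: abs_le_iff mult.commute)

lemma g_less: "s < t \<Longrightarrow> g s < g t"
  by (rule DERIV_pos_imp_increasing[of s t g]) (use g_deriv gd_pos in blast)+

lemma g_inj: "inj g"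
  by (rule injI) (metis g_less linorder_neqE_linordered_idom order_less_irrefl)

lemma g_cont: "continuous_on UNIV g"
  unfolding g_def[abs_def] using fc by (intro continuous_intros)

lemma g_bounds: "\<alpha> * t - A \<le> g t" "g t \<le> \<alpha> * t + A"
  using f_le[of t] unfolding g_def by (auto simp: abs_le_iff)

lemma g_surj: "surj g"
proof -
  have "\<exists>t. g t = u" for u
  proof -
    have a: "g ((u - A) / \<alpha>) \<le> u" using g_bounds(2)[of "(u - A) / \<alpha>"] apos by simp
    have b: "u \<le> g ((u + A) / \<alpha>)" using g_bounds(1)[of "(u + A) / \<alpha>"] apos by simp
    have le: "(u - A) / \<alpha> \<le> (u + A) / \<alpha>" using apos Ap by (simp add: divide_right_mono)
    show ?thesis using IVT[of g "(u - A) / \<alpha>" u "(u + A) / \<alpha>"] a b le g_cont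
      by (auto simp: continuous_on_eq_continuous_at)
  qed
  then show ?thesis by (metis surjI)
qed

lemma inv_g_g: "inv g (g t) = t" using g_inj by simp
lemma g_inv_g: "g (inv g u) = u" using g_surj by (simp add: surj_f_inv_f)

lemma inv_g_mono: "mono (inv g)"
proof (rule monoI)
  fix u v :: real assume "u \<le> v"
  show "inv g u \<le> inv g v"
  proof (rule ccontr)
    assume "\<not> inv g u \<le> inv g v"
    then have "g (inv g v) < g (inv g u)" by (intro g_less) simp
    then show False using \<open>u \<le> v\<close> by (simp add: g_inv_g)
  qed
qed

definition "hh u = inv g u - u / \<alpha>"

lemma hh_g: "hh (g t) = - f t / \<alpha>"
  unfolding hh_def inv_g_g using apos by (simp add: g_def field_simps)

lemma hh_meas[measurable]: "hh \<in> borel_measurable borel"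
proof -
  have "inv g \<in> borel_measurable borel" using inv_g_mono by (rule borel_measurable_mono)
  then show ?thesis unfolding hh_def[abs_def] by measurable
qed


lemma g_mono: "s \<le> t \<Longrightarrow> g s \<le> g t"
  using g_less[of s t] by (cases "s = t") auto

lemma g_top: "filterlim (\<lambda>n. g (real n)) at_top sequentially"
proof (rule filterlim_at_top_mono[where f = "\<lambda>n. \<alpha> * real n - A"])
  show "filterlim (\<lambda>n. \<alpha> * real n - A) at_top sequentially" using apos by real_asymp
  show "eventually (\<lambda>n. \<alpha> * real n - A \<le> g (real n)) sequentially"
    using g_bounds by simp
qed

lemma g_bot: "filterlim (\<lambda>n. g (- real n)) at_bot sequentially"
proof (rule filterlim_at_bot_mono[where u = "\<lambda>n. - \<alpha> * real n + A"])
  show "filterlim (\<lambda>n. - \<alpha> * real n + A) at_bot sequentially" using apos by real_asymp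
  show "eventually (\<lambda>n. g (- real n) \<le> - \<alpha> * real n + A) sequentially"
    using g_bounds(2) by (intro always_eventually allI) (metis minus_mult_commute mult_minus_right)
qed

lemma fp_meas[measurable]: "(\<lambda>t. \<bar>f t\<bar> powr p) \<in> borel_measurable borel" by measurable

lemma fp_le: "\<bar>f t\<bar> powr p \<le> A powr (p - 1) * \<bar>f t\<bar>"
proof (cases "f t = 0")
  case True then show ?thesis using p1 by simp
next
  case False
  have "\<bar>f t\<bar> powr p = \<bar>f t\<bar> powr (p - 1) * \<bar>f t\<bar>"
    using False by (simp add: powr_diff)
  also have "\<dots> \<le> A powr (p - 1) * \<bar>f t\<bar>"
    using f_le[of t] p1 by (intro mult_right_mono powr_mono2) auto
  finally show ?thesis .
qed

lemma fp_int: "integrable lborel (\<lambda>t. \<bar>f t\<bar> powr p)"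
proof (rule Bochner_Integration.integrable_bound)
  show "integrable lborel (\<lambda>t. A powr (p - 1) * \<bar>f t\<bar>)" using f_int by simp
  show "AE t in lborel. norm (\<bar>f t\<bar> powr p) \<le> norm (A powr (p - 1) * \<bar>f t\<bar>)"
    using fp_le by (auto intro!: AE_I2)
qed simp

lemma fpfd_int: "integrable lborel (\<lambda>t. \<bar>f t\<bar> powr p * fd t)"
proof (rule Bochner_Integration.integrable_bound)
  show "integrable lborel (\<lambda>t. (\<sigma> * A) * \<bar>f t\<bar> powr p)" using fp_int by simp
  show "AE t in lborel. norm (\<bar>f t\<bar> powr p * fd t) \<le> norm ((\<sigma> * A) * \<bar>f t\<bar> powr p)"
  proof (intro AE_I2)
    fix t
    have "\<bar>f t\<bar> powr p * \<bar>fd t\<bar> \<le> \<bar>f t\<bar> powr p * (\<sigma> * A)"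
      using fd_bound[of t] by (intro mult_left_mono) auto
    then show "norm (\<bar>f t\<bar> powr p * fd t) \<le> norm ((\<sigma> * A) * \<bar>f t\<bar> powr p)"
      using sp Ap by (simp add: abs_mult mult.commute)
  qed
qed simp


lemma f_lim_top: "(\<lambda>n. f (real n)) \<longlonglongrightarrow> 0" and f_lim_bot: "(\<lambda>n. f (- real n)) \<longlonglongrightarrow> 0"
proof -
  have l: "(\<lambda>n::nat. A / (1 + (real n)\<^sup>2)) \<longlonglongrightarrow> 0" by real_asymp
  show "(\<lambda>n. f (real n)) \<longlonglongrightarrow> 0"
    by (rule Lim_null_comparison[OF _ l]) (use fb in auto)
  show "(\<lambda>n. f (- real n)) \<longlonglongrightarrow> 0"
    by (rule Lim_null_comparison[OF _ l]) (use fb[of "- real _"] in auto)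
qed

lemma int_zero: "(\<integral>t. \<bar>f t\<bar> powr p * fd t \<partial>lborel) = 0"
proof -
  define G where "G t = \<bar>f t\<bar> powr p * fd t" for t
  have Gc: "continuous_on UNIV G"
    unfolding G_def using p1
    by (intro continuous_intros continuous_on_powr' fc fd_cont) auto
  have ftc: "(\<integral>t. indicator {- real n..real n} t *\<^sub>R G t \<partial>lborel) = Phi p (f (real n)) - Phi p (f (- real n))" for n
  proof -
    have "(\<integral>t. indicator {- real n..real n} t *\<^sub>R G t \<partial>lborel) = (\<lambda>t. Phi p (f t)) (real n) - (\<lambda>t. Phi p (f t)) (- real n)"
    proof (rule integral_FTC_atLeastAtMost)
      show "- real n \<le> real n" by simp
      show "continuous_on {- real n..real n} G" using Gc by (rule continuous_on_subset) auto
      fix x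
      have "((\<lambda>t. Phi p (f t)) has_real_derivative \<bar>f x\<bar> powr p * fd x) (at x)"
        by (rule DERIV_chain2[OF Phi_deriv[OF p1] f_deriv'])
      then show "((\<lambda>t. Phi p (f t)) has_vector_derivative G x) (at x within {- real n..real n})"
        unfolding G_def has_real_derivative_iff_has_vector_derivative[symmetric]
        by (rule has_field_derivative_at_within)
    qed
    then show ?thesis by simp
  qed
  have l1: "(\<lambda>n. \<integral>t. indicator {- real n..real n} t *\<^sub>R G t \<partial>lborel) \<longlonglongrightarrow> (\<integral>t. G t \<partial>lborel)"
  proof (rule integral_dominated_convergence[where w = "\<lambda>t. \<bar>G t\<bar>"])
    show "integrable lborel (\<lambda>t. \<bar>G t\<bar>)" unfolding G_def using fpfd_int by simp
    show "G \<in> borel_measurable lborel" unfolding G_def by measurable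
    show "(\<lambda>t. indicator {- real n..real n} t *\<^sub>R G t) \<in> borel_measurable lborel" for n
      unfolding G_def by measurable
    show "AE t in lborel. norm (indicator {- real n..real n} t *\<^sub>R G t) \<le> \<bar>G t\<bar>" for n
      by (intro AE_I2) (auto simp: indicator_def)
    show "AE t in lborel. (\<lambda>n. indicator {- real n..real n} t *\<^sub>R G t) \<longlonglongrightarrow> G t"
    proof (intro AE_I2 tendsto_eventually)
      fix t
      obtain N :: nat where "\<bar>t\<bar> \<le> real N" using real_arch_simple by blast
      then show "eventually (\<lambda>n. indicator {- real n..real n} t *\<^sub>R G t = G t) sequentially"
        unfolding eventually_sequentially
        by (intro exI[of _ N]) (auto simp: indicator_def abs_le_iff)
    qed
  qed
  have l2: "(\<lambda>n. Phi p (f (real n)) - Phi p (f (- real n))) \<longlonglongrightarrow> Phi p 0 - Phi p 0"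
    by (intro tendsto_diff isCont_tendsto_compose[OF Phi_cont[OF p1]] f_lim_top f_lim_bot)
  have "(\<integral>t. G t \<partial>lborel) = 0"
    using LIMSEQ_unique[OF l1] l2 unfolding ftc by simp
  then show ?thesis unfolding G_def .
qed


lemma main_loc:
  "integrable lborel (\<lambda>u. \<bar>hh u\<bar> powr p)
   \<and> (\<integral>u. \<bar>hh u\<bar> powr p \<partial>lborel) = \<alpha> powr (1 - p) * (\<integral>t. \<bar>f t\<bar> powr p \<partial>lborel)"
proof -
  define F where "F u = \<bar>hh u\<bar> powr p" for u
  define G where "G t = \<bar>f t\<bar> powr p / \<alpha> powr p * (\<alpha> + fd t)" for t
  have Fm[measurable]: "F \<in> borel_measurable borel" unfolding F_def by measurable
  have Gm[measurable]: "G \<in> borel_measurable borel" unfolding G_def by measurable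
  have F0: "0 \<le> F u" for u unfolding F_def by simp
  have G0: "0 \<le> G t" for t unfolding G_def using gd_pos[of t] by simp
  have FG: "F (g t) * (\<alpha> + fd t) = G t" for t
  proof -
    have "\<bar>hh (g t)\<bar> = \<bar>f t\<bar> / \<alpha>" using apos by (simp add: hh_g abs_divide)
    then show ?thesis unfolding F_def G_def using apos by (simp add: powr_divide)
  qed
  have cv: "(\<integral>\<^sup>+u. ennreal (F u * indicator {g (- real n)..g (real n)} u) \<partial>lborel)
      = (\<integral>\<^sup>+t. ennreal (G t * indicator {- real n..real n} t) \<partial>lborel)" for n
  proof -
    have "(\<integral>\<^sup>+u. ennreal (F u * indicator {g (- real n)..g (real n)} u) \<partial>lborel)
      = (\<integral>\<^sup>+t. ennreal (F (g t) * (\<alpha> + fd t) * indicator {- real n..real n} t) \<partial>lborel)"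
    proof (rule nn_integral_substitution)
      show "set_borel_measurable borel {g (- real n)..g (real n)} F"
        unfolding set_borel_measurable_def by measurable
      show "(g has_real_derivative \<alpha> + fd x) (at x)" for x by (rule g_deriv)
      show "continuous_on {- real n..real n} (\<lambda>x. \<alpha> + fd x)"
        using fd_cont by (intro continuous_intros continuous_on_subset[OF fd_cont]) auto
      show "0 \<le> \<alpha> + fd x" for x using gd_pos[of x] by simp
    qed simp
    then show ?thesis unfolding FG .
  qed
  have L1: "(\<lambda>n. \<integral>\<^sup>+u. ennreal (F u * indicator {g (- real n)..g (real n)} u) \<partial>lborel) \<longlonglongrightarrow> (\<integral>\<^sup>+u. ennreal (F u) \<partial>lborel)"
  proof (rule nn_lim_interval[OF Fm F0])
    show "decseq (\<lambda>n. g (- real n))" by (intro decseq_SucI g_mono) simp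
    show "incseq (\<lambda>n. g (real n))" by (intro incseq_SucI g_mono) simp
  qed (fact g_bot g_top)+
  have L2: "(\<lambda>n. \<integral>\<^sup>+t. ennreal (G t * indicator {- real n..real n} t) \<partial>lborel) \<longlonglongrightarrow> (\<integral>\<^sup>+t. ennreal (G t) \<partial>lborel)"
  proof (rule nn_lim_interval[OF Gm G0])
    show "decseq (\<lambda>n. - real n)" by (intro decseq_SucI) simp
    show "incseq (\<lambda>n. real n)" by (intro incseq_SucI) simp
    show "filterlim (\<lambda>n. - real n) at_bot sequentially" by real_asymp
    show "filterlim (\<lambda>n. real n) at_top sequentially" by real_asymp
  qed
  have eqN: "(\<integral>\<^sup>+u. ennreal (F u) \<partial>lborel) = (\<integral>\<^sup>+t. ennreal (G t) \<partial>lborel)"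
    using LIMSEQ_unique[OF L1] L2 unfolding cv by simp
  define I where "I = (\<integral>t. \<bar>f t\<bar> powr p \<partial>lborel)"
  have Gexp: "G t = (1 / \<alpha> powr p) * (\<alpha> * \<bar>f t\<bar> powr p + \<bar>f t\<bar> powr p * fd t)" for t
    unfolding G_def by (simp add: field_simps)
  have Gint: "integrable lborel G"
    unfolding Gexp using fp_int fpfd_int by (intro integrable_mult_right Bochner_Integration.integrable_add) auto
  have Gval: "(\<integral>t. G t \<partial>lborel) = \<alpha> powr (1 - p) * I"
  proof -
    have "(\<integral>t. G t \<partial>lborel) = (1 / \<alpha> powr p) * (\<alpha> * I + (\<integral>t. \<bar>f t\<bar> powr p * fd t \<partial>lborel))"
      unfolding Gexp I_def using fp_int fpfd_int by simp
    also have "\<dots> = \<alpha> / \<alpha> powr p * I" unfolding int_zero by simp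
    also have "\<alpha> / \<alpha> powr p = \<alpha> powr (1 - p)" using apos by (simp add: powr_diff)
    finally show ?thesis .
  qed
  have nG: "(\<integral>\<^sup>+t. ennreal (G t) \<partial>lborel) = ennreal (\<integral>t. G t \<partial>lborel)"
    using Gint G0 by (intro nn_integral_eq_integral) auto
  have Fint: "integrable lborel F"
    using eqN nG F0 by (intro integrableI_nn_integral_finite[where x = "\<integral>t. G t \<partial>lborel"]) auto
  have "ennreal (\<integral>u. F u \<partial>lborel) = ennreal (\<integral>t. G t \<partial>lborel)"
    using nn_integral_eq_integral[OF Fint] F0 eqN nG by simp
  then have "(\<integral>u. F u \<partial>lborel) = (\<integral>t. G t \<partial>lborel)"
    using F0 G0 by (subst (asm) ennreal_inj) (auto intro: integral_nonneg_AE)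
  then show ?thesis using Fint Gval unfolding F_def I_def by simp
qed

end


theorem mainTheorem8:
  fixes \<sigma> A \<alpha> p :: real and f g h :: "real \<Rightarrow> real"
  assumes "\<sigma> > 0" and "A > 0"
    and "continuous_on UNIV f"
    and "bandlimited \<sigma> f"
    and "\<And>t. \<bar>f t\<bar> \<le> A / (1 + t\<^sup>2)"
    and "\<alpha> > A * \<sigma>"
    and "g = (\<lambda>t. \<alpha> * t + f t)"
    and "h = (\<lambda>u. inv g u - u / \<alpha>)"
    and "1 \<le> p"
  shows "integrable lborel (\<lambda>u. \<bar>h u\<bar> powr p)
    \<and> Lp_norm p h = Lp_norm p f / \<alpha> powr (1 - 1 / p)"
proof -
  interpret L: bls2 f \<sigma> A \<alpha> p
    using assms(1-6,9) by unfold_locales auto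
  have gg: "g = L.g" using assms(7) by (simp add: fun_eq_iff L.g_def)
  have hh: "h = L.hh" using assms(8) by (simp add: fun_eq_iff L.hh_def gg)
  define I where "I = (\<integral>t. \<bar>f t\<bar> powr p \<partial>lborel)"
  have I0: "0 \<le> I" unfolding I_def by simp
  have a: "\<alpha> > 0" by (rule L.apos)
  have m: "integrable lborel (\<lambda>u. \<bar>h u\<bar> powr p)" "(\<integral>u. \<bar>h u\<bar> powr p \<partial>lborel) = \<alpha> powr (1 - p) * I"
    using L.main_loc unfolding hh I_def by auto
  have p0: "p \<noteq> 0" using assms(9) by simp
  have "Lp_norm p h = (\<alpha> powr (1 - p) * I) powr (1 / p)"
    unfolding Lp_norm_def m(2) ..
  also have "\<dots> = \<alpha> powr ((1 - p) * (1 / p)) * I powr (1 / p)"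
    using a I0 by (simp add: powr_mult powr_powr)
  also have "(1 - p) * (1 / p) = - (1 - 1 / p)" using p0 by (simp add: field_simps)
  also have "\<alpha> powr (- (1 - 1 / p)) * I powr (1 / p) = I powr (1 / p) / \<alpha> powr (1 - 1 / p)"
    by (subst powr_minus) (simp add: divide_inverse mult.commute)
  also have "I powr (1 / p) = Lp_norm p f" unfolding Lp_norm_def I_def ..
  finally show ?thesis using m(1) by simp
qed

end
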